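(* Let $s>0$ and $\mu_1>r$. Suppose that under $\mathbb{Q}$, $\ln S_T\sim N\big(\ln S_0+(r-\tfrac{s^2}{2})T,\,s^2T\big)$, and let $\mathcal{P}=\{\mathbb{P}^\mu:\mu\ge\mu_1\}$ where under $\mathbb{P}^\mu$, $\ln S_T\sim N\big(\ln S_0+(\mu-\tfrac{s^2}{2})T,\,s^2T\big)$. Then $\mathbb{P}^{\mu_1}$ is a least favorable measure with respect to $\mathbb{F}_{FSD}$, its likelihood ratio $\ell^{\mathbb{P}^{\mu_1}}$ is a strictly increasing function of $S_T$, is continuously distributed under $\mathbb{P}^{\mu_1}$, and $1/\ell^{\mathbb{P}^{\mu_1}}$ has finite variance under $\mathbb{P}^{\mu_1}$. Consequently, for every cdf $F_0$ with $\int_0^1(F_0^{-1}(u))^2du<\infty$ and $F_0(x)=0$ for $x<0$, the $\mathbb{F}_{FSD}$-robust cost-efficiency problem for $F_0$ has the $\mathbb{P}^{\mu_1}$-a.s. unique solution $$X^*=F_0^{-1}\big(F_{S_T}^{\mathbb{P}^{\mu_1}}(S_T)\big).$$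
   Context: Standing setting: fix $T>0$, $r\in\mathbb{R}$, $S_0>0$, and write $\mathbb{R}_+=[0,\infty)$. $S_T:\Omega\to\mathbb{R}_+$ is a random variable, $\mathcal{F}=\sigma(S_T)$ (so a probability measure on $(\Omega,\mathcal{F})$ is determined by the law of $S_T$). The set of payoffs is $\mathcal{X}=\{g(S_T): g:\mathbb{R}_+\to\mathbb{R}_+\text{ measurable}, E_{\mathbb{Q}}[|g(S_T)|]<\infty\}$, and the price of $X\in\mathcal{X}$ is $e^{-rT}E_{\mathbb{Q}}[X]$. For $\mathbb{P}\in\mathcal{P}$, $\ell^{\mathbb{P}}=d\mathbb{P}/d\mathbb{Q}$; $F_X^{\mathbb{P}}$ is the cdf of $X$ under $\mathbb{P}$; for a cdf $F$, $F^{-1}(p)=\inf\{x:F(x)\ge p\}$. For a set $\mathbb{F}$ of measurable functions $\mathbb{R}_+\to\mathbb{R}$ and cdfs $F,G$ on $\mathbb{R}_+$, $F\preceq_{\mathbb{F}}G$ means $\int f\,dF\le\int f\,dG$ for all $f\in\mathbb{F}$ with finite integrals. $\mathbb{F}_{FSD}$ is the set of all non-decreasing functions $\mathbb{R}_+\to\mathbb{R}$. A measure $\mathbb{P}^*\in\mathcal{P}$ with $\ell^*=d\mathbb{P}^*/d\mathbb{Q}$ is least favorable w.r.t. $\mathbb{F}$ if $F_{\ell^*}^{\mathbb{P}^*}\preceq_{\mathbb{F}}F_{\ell^*}^{\mathbb{P}}$ for all $\mathbb{P}\in\mathcal{P}$. The $\mathbb{F}$-robust cost-efficiency problem for a cdf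 $F_0$ is $\inf\{e^{-rT}E_{\mathbb{Q}}[X]: X\in\mathcal{X},\ F_0\preceq_{\mathbb{F}}F_X^{\mathbb{P}}\ \forall\mathbb{P}\in\mathcal{P}\}$. *)

theory Defs
  imports "HOL-Probability.Probability"
begin

text \<open>Canonical model: since F = sigma(S_T), every measure is identified with the law of S_T,
  a probability measure on the real line (concentrated on (0,infinity)); S_T is the identity,
  and a payoff X = g(S_T) is identified with g.\<close>

definition ST_law :: "real \<Rightarrow> real \<Rightarrow> real \<Rightarrow> real \<Rightarrow> real measure" where
  "ST_law S0 s T \<mu> =
     distr (density lborel (normal_density (ln S0 + (\<mu> - s\<^sup>2 / 2) * T) (s * sqrt T))) borel exp"

definition lik :: "real measure \<Rightarrow> real measure \<Rightarrow> real \<Rightarrow> real" where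
  "lik Q P x = enn2real (RN_deriv Q P x)"

definition pref :: "(real \<Rightarrow> real) set \<Rightarrow> real measure \<Rightarrow> real measure \<Rightarrow> bool" where
  "pref \<F> M N \<longleftrightarrow> (\<forall>f\<in>\<F>. integrable M f \<longrightarrow> integrable N f \<longrightarrow> integral\<^sup>L M f \<le> integral\<^sup>L N f)"

definition FFSD :: "(real \<Rightarrow> real) set" where
  "FFSD = {f. mono f}"

definition least_favorable ::
  "(real \<Rightarrow> real) set \<Rightarrow> real measure \<Rightarrow> real measure set \<Rightarrow> real measure \<Rightarrow> bool" where
  "least_favorable \<F> Q \<P> Ps \<longleftrightarrow> Ps \<in> \<P> \<and>
     (\<forall>P\<in>\<P>. pref \<F> (distr Ps borel (lik Q Ps)) (distr P borel (lik Q Ps)))"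

text \<open>Payoffs g(S_T): g measurable, nonnegative on the range (0,infinity) of S_T, Q-integrable.\<close>
definition payoff :: "real measure \<Rightarrow> (real \<Rightarrow> real) \<Rightarrow> bool" where
  "payoff Q g \<longleftrightarrow> g \<in> borel_measurable borel \<and> (\<forall>x>0. 0 \<le> g x) \<and> integrable Q g"

definition price :: "real \<Rightarrow> real \<Rightarrow> real measure \<Rightarrow> (real \<Rightarrow> real) \<Rightarrow> real" where
  "price r T Q g = exp (- r * T) * integral\<^sup>L Q g"

text \<open>Feasible set of the F-robust cost-efficiency problem for the law M0 (cdf F0 = cdf M0).\<close>
definition robust_feasible ::
  "(real \<Rightarrow> real) set \<Rightarrow> real measure \<Rightarrow> real measure set \<Rightarrow> real measure \<Rightarrow> (real \<Rightarrow> real) \<Rightarrow> bool" where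
  "robust_feasible \<F> Q \<P> M0 g \<longleftrightarrow> payoff Q g \<and> (\<forall>P\<in>\<P>. pref \<F> M0 (distr P borel g))"

definition robust_solution ::
  "(real \<Rightarrow> real) set \<Rightarrow> real \<Rightarrow> real \<Rightarrow> real measure \<Rightarrow> real measure set \<Rightarrow> real measure
     \<Rightarrow> (real \<Rightarrow> real) \<Rightarrow> bool" where
  "robust_solution \<F> r T Q \<P> M0 g \<longleftrightarrow> robust_feasible \<F> Q \<P> M0 g \<and>
     (\<forall>h. robust_feasible \<F> Q \<P> M0 h \<longrightarrow> price r T Q g \<le> price r T Q h)"

definition quantile :: "(real \<Rightarrow> real) \<Rightarrow> real \<Rightarrow> real" where
  "quantile F p = Inf {x. p \<le> F x}"

end

theory Submission
  imports Defs
begin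


locale lognorm =
  fixes S0 s T :: real
  assumes S0: "S0 > 0" and s: "s > 0" and T: "T > 0"
begin

definition "sg = s * sqrt T"
definition "mm \<mu> = ln S0 + (\<mu> - s\<^sup>2 / 2) * T"
definition "NN \<mu> = density lborel (normal_density (mm \<mu>) sg)"
definition "PP \<mu> = ST_law S0 s T \<mu>"
definition "LR \<mu> \<nu> x = exp (((ln x - mm \<mu>)\<^sup>2 - (ln x - mm \<nu>)\<^sup>2) / (2 * sg\<^sup>2))"

lemma sg_pos: "sg > 0" using s T by (simp add: sg_def)

lemma PP_eq: "PP \<mu> = distr (NN \<mu>) borel exp"
  by (simp add: PP_def ST_law_def NN_def mm_def sg_def)

lemma prob_NN: "prob_space (NN \<mu>)"
  unfolding NN_def by (rule prob_space_normal_density) (rule sg_pos)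

lemma sets_NN[simp, measurable_cong]: "sets (NN \<mu>) = sets borel"
  by (simp add: NN_def)

lemma sets_PP[simp, measurable_cong]: "sets (PP \<mu>) = sets borel"
  by (simp add: PP_eq)

lemma space_PP[simp]: "space (PP \<mu>) = UNIV"
  by (simp add: PP_eq)

lemma prob_PP: "prob_space (PP \<mu>)"
  unfolding PP_eq by (rule prob_space.prob_space_distr[OF prob_NN]) simp

lemma real_distribution_PP: "real_distribution (PP \<mu>)"
  unfolding real_distribution_def real_distribution_axioms_def using prob_PP by simp

lemma AE_PP_pos: "AE x in PP \<mu>. x > 0"
  unfolding PP_eq by (subst AE_distr_iff) auto

lemma LR_measurable[measurable]: "LR \<mu> \<nu> \<in> borel_measurable borel"
  unfolding LR_def by measurable

lemma LR_pos: "LR \<mu> \<nu> x > 0" by (simp add: LR_def)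

lemma LR_formula: "LR \<mu> \<nu> x = exp ((mm \<nu> - mm \<mu>) * (2 * ln x - mm \<mu> - mm \<nu>) / (2 * sg\<^sup>2))"
  unfolding LR_def by (simp add: power2_eq_square algebra_simps)

lemma normal_LR: "normal_density (mm \<mu>) sg y * LR \<mu> \<nu> (exp y) = normal_density (mm \<nu>) sg y"
proof -
  have "exp (-(y - mm \<mu>)\<^sup>2/ (2 * sg\<^sup>2)) * LR \<mu> \<nu> (exp y) = exp (-(y - mm \<nu>)\<^sup>2/ (2 * sg\<^sup>2))"
    unfolding LR_def using sg_pos by (simp add: exp_add[symmetric] field_simps)
  then show ?thesis unfolding normal_density_def by simp
qed

lemma density_PP: "density (PP \<mu>) (\<lambda>x. ennreal (LR \<mu> \<nu> x)) = PP \<nu>"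
proof -
  have "density (PP \<mu>) (\<lambda>x. ennreal (LR \<mu> \<nu> x)) = distr (density (NN \<mu>) (\<lambda>y. ennreal (LR \<mu> \<nu> (exp y)))) borel exp"
    unfolding PP_eq by (subst density_distr) auto
  also have "density (NN \<mu>) (\<lambda>y. ennreal (LR \<mu> \<nu> (exp y))) = NN \<nu>"
    unfolding NN_def
    by (subst density_density_eq) (auto simp: normal_LR ennreal_mult'[symmetric])
  finally show ?thesis by (simp add: PP_eq)
qed

end


context lognorm begin

lemma AE_PP_transfer: "AE x in PP \<mu>. P x \<Longrightarrow> AE x in PP \<nu>. P x"
proof -
  assume "AE x in PP \<mu>. P x"
  then have "AE x in density (PP \<mu>) (\<lambda>x. ennreal (LR \<mu> \<nu> x)). P x"
    by (subst AE_density) (auto elim: AE_mp)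
  then show ?thesis by (simp only: density_PP)
qed

lemma emeasure_NN_singleton: "emeasure (NN \<mu>) {y} = 0"
  unfolding NN_def
  by (subst emeasure_density) (auto intro!: nn_integral_null_set)

lemma measure_PP_singleton: "measure (PP \<mu>) {x} = 0"
proof -
  have "exp -` {x} = (if x > 0 then {ln x} else {})" by auto
  then show ?thesis unfolding PP_eq
    by (subst measure_distr) (auto simp: measure_def emeasure_NN_singleton)
qed

lemma NN_shift: "distr (NN \<mu>) borel ((+) (mm \<nu> - mm \<mu>)) = NN \<nu>"
proof -
  let ?d = "mm \<nu> - mm \<mu>"
  have "NN \<nu> = density (distr lborel borel ((+) ?d)) (\<lambda>y. ennreal (normal_density (mm \<nu>) sg y))"
    unfolding NN_def by (simp add: lborel_distr_plus)
  also have "\<dots> = distr (density lborel (\<lambda>y. ennreal (normal_density (mm \<nu>) sg (?d + y)))) borel ((+) ?d)"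
    by (subst density_distr) auto
  also have "(\<lambda>y. normal_density (mm \<nu>) sg (?d + y)) = normal_density (mm \<mu>) sg"
    by (auto simp: normal_density_def fun_eq_iff)
  finally show ?thesis by (simp add: NN_def)
qed

lemma mm_mono: "\<mu> \<le> \<nu> \<Longrightarrow> mm \<mu> \<le> mm \<nu>"
  using T by (simp add: mm_def mult_right_mono)

lemma translation_ineq:
  fixes G :: "real \<Rightarrow> real"
  assumes "\<mu> \<le> \<nu>" and G: "mono_on {0<..} G" and [measurable]: "G \<in> borel_measurable borel"
    and i1: "integrable (PP \<mu>) G" and i2: "integrable (PP \<nu>) G"
  shows "integral\<^sup>L (PP \<mu>) G \<le> integral\<^sup>L (PP \<nu>) G"
proof -
  let ?d = "mm \<nu> - mm \<mu>"
  have d: "?d \<ge> 0" using mm_mono[OF assms(1)] by simp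
  have PPnu: "PP \<nu> = distr (NN \<mu>) borel (\<lambda>y. exp (?d + y))"
    unfolding PP_eq NN_shift[symmetric, of \<mu> \<nu>] by (subst distr_distr) (auto simp: comp_def)
  have e1: "integral\<^sup>L (PP \<mu>) G = (\<integral>y. G (exp y) \<partial>NN \<mu>)"
    unfolding PP_eq by (rule integral_distr[of exp _ borel G]) auto
  have e2: "integral\<^sup>L (PP \<nu>) G = (\<integral>y. G (exp (?d + y)) \<partial>NN \<mu>)"
    unfolding PPnu by (rule integral_distr[of "\<lambda>y. exp (?d + y)" _ borel G]) auto
  have j1: "integrable (NN \<mu>) (\<lambda>y. G (exp y))"
    using i1 unfolding PP_eq by (subst (asm) integrable_distr_eq) auto
  have j2: "integrable (NN \<mu>) (\<lambda>y. G (exp (?d + y)))"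
    using i2 unfolding PPnu by (subst (asm) integrable_distr_eq) auto
  have "(\<integral>y. G (exp y) \<partial>NN \<mu>) \<le> (\<integral>y. G (exp (?d + y)) \<partial>NN \<mu>)"
    using j1 j2 d by (intro integral_mono) (auto intro!: mono_onD[OF G])
  then show ?thesis using e1 e2 by simp
qed

end


context lognorm begin

lemma space_NN[simp]: "space (NN \<mu>) = UNIV" by (simp add: NN_def)

lemma fbm_PP: "finite_borel_measure (PP \<mu>)"
  by (rule real_distribution.finite_borel_measure_M[OF real_distribution_PP])

lemma lt_exp1: "0 < (a::real) \<Longrightarrow> ln a < y \<Longrightarrow> a < exp y" using exp_ln[of a] exp_less_mono[of "ln a" y] by simp
lemma lt_exp2: "0 < (b::real) \<Longrightarrow> y < ln b \<Longrightarrow> exp y < b" using exp_ln[of b] exp_less_mono[of y "ln b"] by simp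

lemma NN_interval_pos: assumes "c < d" shows "emeasure (NN \<mu>) {c<..<d} > 0"
proof (rule ccontr)
  assume "\<not> ?thesis"
  then have "{c<..<d} \<in> null_sets (NN \<mu>)" by (auto simp: null_sets_def NN_def)
  then have "AE x in lborel. x \<in> {c<..<d} \<longrightarrow> ennreal (normal_density (mm \<mu>) sg x) = 0"
    unfolding NN_def by (subst (asm) null_sets_density_iff) auto
  then have "AE x in lborel. x \<notin> {c<..<d}"
  proof (rule eventually_mono)
    fix x assume h: "x \<in> {c<..<d} \<longrightarrow> ennreal (normal_density (mm \<mu>) sg x) = 0"
    have "normal_density (mm \<mu>) sg x > 0" by (rule normal_density_pos[OF sg_pos])
    then show "x \<notin> {c<..<d}" using h by auto
  qed
  then have "emeasure lborel {c<..<d} = 0"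
    by (subst (asm) AE_iff_measurable[of "{c<..<d}"]) auto
  then show False using assms by simp
qed

lemma NN_pos: assumes "c < d" "{c<..<d} \<subseteq> A" "A \<in> sets borel" shows "measure (NN \<mu>) A > 0"
proof -
  interpret prob_space "NN \<mu>" by (rule prob_NN)
  have "emeasure (NN \<mu>) {c<..<d} \<le> emeasure (NN \<mu>) A"
    using assms by (intro emeasure_mono) auto
  with NN_interval_pos[OF assms(1), of \<mu>] have "emeasure (NN \<mu>) A > 0" by simp
  then show ?thesis by (simp add: emeasure_eq_measure)
qed

lemma PP_pos: assumes "c < d" "{c<..<d} \<subseteq> exp -` A" "A \<in> sets borel" shows "measure (PP \<mu>) A > 0"
proof -
  have "(exp::real\<Rightarrow>real) \<in> borel_measurable borel" by measurable
  then have "exp -` A \<in> sets borel" using measurable_sets[of exp borel borel A] assms by auto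
  then show ?thesis unfolding PP_eq using assms by (subst measure_distr) (auto intro!: NN_pos)
qed

lemma cdf_PP_nonpos: "x \<le> 0 \<Longrightarrow> cdf (PP \<mu>) x = 0"
proof -
  assume "x \<le> 0"
  then have "exp -` {..x} = {}" by auto (smt (verit) exp_gt_zero)
  then show ?thesis unfolding cdf_def PP_eq by (subst measure_distr) auto
qed

lemma cdf_PP_cont: "isCont (cdf (PP \<mu>)) x"
  using finite_borel_measure.isCont_cdf[OF fbm_PP] measure_PP_singleton by simp

lemma cdf_PP_strict: assumes "0 < a" "a < b" shows "cdf (PP \<mu>) a < cdf (PP \<mu>) b"
proof -
  have eq: "cdf (PP \<mu>) b - cdf (PP \<mu>) a = measure (PP \<mu>) {a<..b}"
    using assms by (intro finite_borel_measure.cdf_diff_eq real_distribution.finite_borel_measure_M real_distribution_PP) simp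
  have sub: "{ln a<..<ln b} \<subseteq> exp -` {a<..b}"
  proof
    fix y assume "y \<in> {ln a<..<ln b}"
    then show "y \<in> exp -` {a<..b}" using assms lt_exp1[of a y] lt_exp2[of b y] by auto
  qed
  have "ln a < ln b" using assms by simp
  then have "measure (PP \<mu>) {a<..b} > 0" using sub by (intro PP_pos) auto
  then show ?thesis using eq by simp
qed

lemma cdf_PP_gt0: assumes "x > 0" shows "cdf (PP \<mu>) x > 0"
  using cdf_PP_strict[of "x/2" x \<mu>] cdf_PP_nonpos[of 0] assms
    finite_borel_measure.cdf_nondecreasing[OF fbm_PP, of 0 "x/2" \<mu>] by simp

lemma cdf_PP_lt1: assumes "x > 0" shows "cdf (PP \<mu>) x < 1"
proof -
  interpret prob_space "PP \<mu>" by (rule prob_PP)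
  have sub: "{ln x<..<ln x + 1} \<subseteq> exp -` {x<..}"
  proof
    fix y assume "y \<in> {ln x<..<ln x + 1}"
    then show "y \<in> exp -` {x<..}" using assms lt_exp1[of x y] by auto
  qed
  have "measure (PP \<mu>) {x<..} > 0" 
    by (rule PP_pos[OF _ sub]) auto
  moreover have "measure (PP \<mu>) {..x} + measure (PP \<mu>) {x<..} = 1"
  proof -
    have "measure (PP \<mu>) ({..x} \<union> {x<..}) = measure (PP \<mu>) {..x} + measure (PP \<mu>) {x<..}"
      by (rule finite_measure_Union) auto
    moreover have "{..x} \<union> {x<..} = UNIV" by auto
    ultimately show ?thesis using prob_space by simp
  qed
  ultimately show ?thesis by (simp add: cdf_def)
qed

end



lemma quantile_set:
  assumes M: "real_distribution M" and u: "0 < u" "u < 1"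
  shows "{x. u \<le> cdf M x} \<noteq> {}" "bdd_below {x. u \<le> cdf M x}"
proof -
  interpret real_distribution M by (rule M)
  have "eventually (\<lambda>x. cdf M x > u) at_top"
    using order_tendstoD(1)[OF cdf_lim_at_top_prob u(2)] .
  then obtain x where "cdf M x > u" by (auto simp: eventually_at_top_linorder)
  then show "{x. u \<le> cdf M x} \<noteq> {}" using less_imp_le by blast
  have "eventually (\<lambda>x. cdf M x < u) at_bot"
    using order_tendstoD(2)[OF cdf_lim_at_bot u(1)] .
  then obtain z where z: "\<And>y. y \<le> z \<Longrightarrow> cdf M y < u" by (auto simp: eventually_at_bot_linorder)
  have "\<forall>y\<in>{x. u \<le> cdf M x}. z \<le> y"
  proof
    fix y assume "y \<in> {x. u \<le> cdf M x}"
    then show "z \<le> y" using z[of y] by force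
  qed
  then show "bdd_below {x. u \<le> cdf M x}" by (auto simp: bdd_below_def)
qed

lemma quantile_le_iff:
  assumes M: "real_distribution M" and u: "0 < u" "u < 1"
  shows "quantile (cdf M) u \<le> x \<longleftrightarrow> u \<le> cdf M x"
proof -
  interpret real_distribution M by (rule M)
  let ?S = "{x. u \<le> cdf M x}"
  note ne = quantile_set(1)[OF M u] and bdd = quantile_set(2)[OF M u]
  let ?q = "Inf ?S"
  have qS: "u \<le> cdf M ?q"
  proof (rule ccontr)
    assume "\<not> u \<le> cdf M ?q"
    then have "cdf M ?q < u" by simp
    moreover have "(cdf M \<longlongrightarrow> cdf M ?q) (at_right ?q)"
      using cdf_is_right_cont[of ?q] by (simp add: continuous_within)
    ultimately have "eventually (\<lambda>y. cdf M y < u) (at_right ?q)"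
      by (rule order_tendstoD(2)[rotated])
    then obtain b where b: "b > ?q" "\<And>y. y > ?q \<Longrightarrow> y < b \<Longrightarrow> cdf M y < u"
      by (auto simp: eventually_at_right_field)
    then obtain y where y: "y \<in> ?S" "y < b" using cInf_less_iff[OF ne bdd] by auto
    have "?q \<le> y" using y(1) bdd by (rule cInf_lower)
    show False
    proof (cases "y = ?q")
      case True then show False using y(1) \<open>cdf M ?q < u\<close> by auto
    next
      case False then show False using b(2)[of y] y \<open>?q \<le> y\<close> by auto
    qed
  qed
  show ?thesis
  proof
    assume "quantile (cdf M) u \<le> x"
    then have "?q \<le> x" by (simp add: quantile_def)
    then show "u \<le> cdf M x" using qS cdf_nondecreasing[of ?q x] by linarith
  next
    assume "u \<le> cdf M x"
    then have "x \<in> ?S" by simp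
    then show "quantile (cdf M) u \<le> x" unfolding quantile_def using bdd by (rule cInf_lower)
  qed
qed

lemma quantile_cdf_ge:
  assumes M: "real_distribution M" and u: "0 < u" "u < 1"
  shows "u \<le> cdf M (quantile (cdf M) u)"
  using quantile_le_iff[OF M u, of "quantile (cdf M) u"] by simp

lemma quantile_mono:
  assumes M: "real_distribution M"
  shows "mono_on {0<..<1} (quantile (cdf M))"
proof (rule mono_onI)
  fix u v :: real assume uv: "u \<in> {0<..<1}" "v \<in> {0<..<1}" "u \<le> v"
  have "v \<le> cdf M (quantile (cdf M) v)" using quantile_cdf_ge[OF M] uv by auto
  then show "quantile (cdf M) u \<le> quantile (cdf M) v"
    using quantile_le_iff[OF M, of u] uv by auto
qed

lemma quantile_nonneg:
  assumes M: "real_distribution M" and u: "0 < u" "u < 1" and neg: "\<forall>x<0. cdf M x = 0"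
  shows "0 \<le> quantile (cdf M) u"
proof (rule ccontr)
  assume "\<not> ?thesis"
  then have "quantile (cdf M) u < 0" by simp
  moreover have "u \<le> cdf M (quantile (cdf M) u)" by (rule quantile_cdf_ge[OF M u])
  ultimately show False using neg u by auto
qed

lemma quantile_measurable:
  assumes M: "real_distribution M"
  shows "quantile (cdf M) \<in> borel_measurable borel"
proof (rule borel_measurable_piecewise_mono[of "{{..0}, {0<..<1}, {1}, {1<..}}"])
  interpret real_distribution M by (rule M)
  fix c :: "real set" assume c: "c \<in> {{..0}, {0<..<1}, {1}, {1<..}}"
  have k1: "quantile (cdf M) p = Inf UNIV" if "p \<le> 0" for p
    unfolding quantile_def using that cdf_nonneg by (intro arg_cong[where f=Inf]) (auto intro: order_trans)
  have k2: "quantile (cdf M) p = Inf {}" if "p > 1" for p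
  proof -
    { fix x have "cdf M x \<le> 1" by (rule cdf_bounded_prob) hence "\<not> p \<le> cdf M x" using that by linarith }
    then have "{x. p \<le> cdf M x} = {}" by auto
    then show ?thesis unfolding quantile_def by simp
  qed
  show "mono_on c (quantile (cdf M))"
    using c quantile_mono[OF M] k1 k2 by (auto simp: mono_on_def)
qed auto

definition "UU = density lborel (indicator {0<..<1::real})"

lemma measure_UU: "A \<in> sets borel \<Longrightarrow> measure UU A = measure lborel ({0<..<1} \<inter> A)"
  unfolding UU_def by (subst measure_restricted) auto

lemma real_distribution_UU: "real_distribution UU"
proof -
  have "prob_space UU"
    by (rule prob_spaceI) (simp add: UU_def emeasure_restricted)
  then show ?thesis by (simp add: real_distribution_def real_distribution_axioms_def UU_def)
qed

lemma distr_UU_quantile: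
  assumes M: "real_distribution M"
  shows "distr UU borel (quantile (cdf M)) = M"
proof -
  interpret real_distribution M by (rule M)
  note qm = quantile_measurable[OF M]
  have sU: "sets UU = sets borel" by (simp add: UU_def)
  have qm': "quantile (cdf M) \<in> borel_measurable UU" unfolding measurable_cong_sets[OF sU refl] by (rule qm)
  have rd: "real_distribution (distr UU borel (quantile (cdf M)))"
    using prob_space.real_distribution_distr[OF real_distribution.axioms(1)[OF real_distribution_UU] qm'] .
  have "cdf (distr UU borel (quantile (cdf M))) x = cdf M x" for x
  proof -
    have "cdf (distr UU borel (quantile (cdf M))) x = measure (distr UU borel (quantile (cdf M))) {..x}"
      by (simp add: cdf_def2)
    also have "\<dots> = measure UU (quantile (cdf M) -` {..x} \<inter> space UU)"
      by (rule measure_distr[OF qm']) auto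
    also have "\<dots> = measure UU (quantile (cdf M) -` {..x})" by (simp add: UU_def)
    also have "\<dots> = measure lborel ({0<..<1} \<inter> quantile (cdf M) -` {..x})"
      using qm by (intro measure_UU) (auto intro: measurable_sets_borel)
    also have "{0<..<1} \<inter> quantile (cdf M) -` {..x} = {0<..<1} \<inter> {..cdf M x}"
      using quantile_le_iff[OF M] by auto
    also have "measure lborel ({0<..<1} \<inter> {..cdf M x}) = cdf M x"
    proof (cases "cdf M x = 1")
      case True
      then have "{0<..<1} \<inter> {..cdf M x} = {0<..<1::real}" by auto
      then show ?thesis using True by simp
    next
      case False
      then have "cdf M x < 1" using cdf_bounded_prob[of x] by simp
      then have "{0<..<1} \<inter> {..cdf M x} = {0<..cdf M x}" by auto
      then show ?thesis using cdf_nonneg[of x] by simp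
    qed
    finally show ?thesis .
  qed
  then show ?thesis using cdf_unique[OF rd M] by auto
qed



context lognorm begin

lemma cdf_PP_level:
  assumes "0 \<le> v" "v < 1"
  obtains t where "t \<ge> 0" "cdf (PP \<mu>) -` {..v} = {..t}" "cdf (PP \<mu>) t = v"
proof -
  let ?F = "cdf (PP \<mu>)"
  interpret real_distribution "PP \<mu>" by (rule real_distribution_PP)
  have "eventually (\<lambda>x. ?F x > v) at_top"
    using order_tendstoD(1)[OF cdf_lim_at_top_prob assms(2)] .
  then obtain b where b: "?F b > v" by (auto simp: eventually_at_top_linorder)
  have F0: "?F 0 = 0" by (rule cdf_PP_nonpos) simp
  have "?F 0 \<le> v" using F0 assms by simp
  moreover have "v \<le> ?F (max b 0)" using b cdf_nondecreasing[of b "max b 0"] by simp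
  moreover have "continuous_on {0..max b 0} ?F"
    using cdf_PP_cont by (intro continuous_at_imp_continuous_on) auto
  ultimately obtain t where t: "0 \<le> t" "?F t = v"
    using IVT'[of ?F 0 v "max b 0"] by auto
  have "?F -` {..v} = {..t}"
  proof (intro set_eqI iffI)
    fix x assume "x \<in> ?F -` {..v}"
    then have "?F x \<le> ?F t" using t by simp
    show "x \<in> {..t}"
    proof (rule ccontr)
      assume "x \<notin> {..t}"
      then have "t < x" by simp
      then have "?F t < ?F x"
      proof (cases "t = 0")
        case True then show ?thesis using cdf_PP_gt0[of x] \<open>t < x\<close> F0 by simp
      next
        case False
        then have "0 < t" using t by simp
        then show ?thesis using cdf_PP_strict[of t x \<mu>] \<open>t < x\<close> t by simp
      qed
      then show False using \<open>?F x \<le> ?F t\<close> by simp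
    qed
  next
    fix x assume "x \<in> {..t}"
    then show "x \<in> ?F -` {..v}" using cdf_nondecreasing[of x t] t by simp
  qed
  then show ?thesis using that t by blast
qed

lemma cdf_PP_measurable[measurable]: "cdf (PP \<mu>) \<in> borel_measurable borel"
  by (rule borel_measurable_mono) (auto simp: mono_def intro: finite_borel_measure.cdf_nondecreasing[OF fbm_PP])

lemma distr_PP_cdf: "distr (PP \<mu>) borel (cdf (PP \<mu>)) = UU"
proof -
  let ?F = "cdf (PP \<mu>)"
  interpret real_distribution "PP \<mu>" by (rule real_distribution_PP)
  have rd: "real_distribution (distr (PP \<mu>) borel ?F)" by simp
  have "cdf (distr (PP \<mu>) borel ?F) v = cdf UU v" for v
  proof -
    have "cdf (distr (PP \<mu>) borel ?F) v = measure (PP \<mu>) (?F -` {..v})"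
      by (simp add: cdf_def2 measure_distr)
    moreover have "cdf UU v = measure lborel ({0<..<1} \<inter> {..v})"
      by (simp add: cdf_def2 measure_UU)
    moreover have "measure (PP \<mu>) (?F -` {..v}) = measure lborel ({0<..<1} \<inter> {..v})"
    proof (cases "v < 0")
      case True
      then have "?F -` {..v} = {}" using cdf_nonneg by (auto simp: not_le) (smt (verit) cdf_nonneg)
      moreover have "{0<..<1} \<inter> {..v} = {}" using True by auto
      ultimately show ?thesis by simp
    next
      case False
      show ?thesis
      proof (cases "v < 1")
        case True
        obtain t where t: "t \<ge> 0" "?F -` {..v} = {..t}" "?F t = v"
          using cdf_PP_level[of v \<mu>] False True by auto
        have "{0<..<1} \<inter> {..v} = {0<..v}" using True by auto
        then show ?thesis using t False by (simp add: cdf_def2)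
      next
        case False
        { fix x have "?F x \<le> 1" by (rule cdf_bounded_prob) hence "?F x \<le> v" using False by linarith }
        then have "?F -` {..v} = UNIV" by auto
        moreover have "{0<..<1} \<inter> {..v} = {0<..<1::real}" using False by auto
        ultimately show ?thesis using prob_space by simp
      qed
    qed
    ultimately show ?thesis by simp
  qed
  then show ?thesis using cdf_unique[OF rd real_distribution_UU] by auto
qed

definition "Xs M0 \<mu> x = quantile (cdf M0) (cdf (PP \<mu>) x)"

lemma Xs_measurable[measurable]: "real_distribution M0 \<Longrightarrow> Xs M0 \<mu> \<in> borel_measurable borel"
  unfolding Xs_def using quantile_measurable by measurable

lemma distr_Xs: "real_distribution M0 \<Longrightarrow> distr (PP \<mu>) borel (Xs M0 \<mu>) = M0"
proof -
  assume M0: "real_distribution M0"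
  note qm = quantile_measurable[OF M0]
  have "distr (PP \<mu>) borel (Xs M0 \<mu>) = distr (distr (PP \<mu>) borel (cdf (PP \<mu>))) borel (quantile (cdf M0))"
    unfolding Xs_def using qm by (subst distr_distr) (auto simp: comp_def)
  also have "\<dots> = M0" by (simp add: distr_PP_cdf distr_UU_quantile[OF M0])
  finally show ?thesis .
qed

lemma cdf_PP_01: "x > 0 \<Longrightarrow> cdf (PP \<mu>) x \<in> {0<..<1}"
  using cdf_PP_gt0 cdf_PP_lt1 by auto

lemma Xs_mono: "real_distribution M0 \<Longrightarrow> mono_on {0<..} (Xs M0 \<mu>)"
  unfolding Xs_def
  by (rule mono_onI, rule mono_onD[OF quantile_mono])
     (auto intro!: cdf_PP_gt0 cdf_PP_lt1 finite_borel_measure.cdf_nondecreasing[OF fbm_PP])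

lemma Xs_nonneg: "real_distribution M0 \<Longrightarrow> \<forall>x<0. cdf M0 x = 0 \<Longrightarrow> x > 0 \<Longrightarrow> 0 \<le> Xs M0 \<mu> x"
  unfolding Xs_def using cdf_PP_01[of x \<mu>] by (intro quantile_nonneg) auto

end


context lognorm begin

lemma sigma_finite_PP: "sigma_finite_measure (PP \<mu>)"
  using prob_PP by (simp add: prob_space_imp_sigma_finite)

lemma lik_AE: "AE x in PP \<mu>. lik (PP \<mu>) (PP \<nu>) x = LR \<mu> \<nu> x"
proof -
  have "AE x in PP \<mu>. ennreal (LR \<mu> \<nu> x) = RN_deriv (PP \<mu>) (PP \<nu>) x"
    by (rule sigma_finite_measure.RN_deriv_unique[OF sigma_finite_PP]) (auto simp: density_PP)
  then show ?thesis
  proof (rule eventually_mono)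
    fix x assume "ennreal (LR \<mu> \<nu> x) = RN_deriv (PP \<mu>) (PP \<nu>) x"
    then have "RN_deriv (PP \<mu>) (PP \<nu>) x = ennreal (LR \<mu> \<nu> x)" by simp
    then show "lik (PP \<mu>) (PP \<nu>) x = LR \<mu> \<nu> x" unfolding lik_def using LR_pos[of \<mu> \<nu> x] by simp
  qed
qed

lemma LR_inv: "LR \<mu> \<nu> x * LR \<nu> \<mu> x = 1"
  unfolding LR_def by (simp add: mult_exp_exp add_divide_distrib[symmetric])

lemma LR_strict: assumes "mm \<mu> < mm \<nu>" "0 < x" "x < y" shows "LR \<mu> \<nu> x < LR \<mu> \<nu> y"
proof -
  have "ln x < ln y" using assms by simp
  then have "(mm \<nu> - mm \<mu>) * (2 * ln x - mm \<mu> - mm \<nu>) < (mm \<nu> - mm \<mu>) * (2 * ln y - mm \<mu> - mm \<nu>)"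
    using assms(1) by (intro mult_strict_left_mono) auto
  then show ?thesis unfolding LR_formula using sg_pos by (simp add: divide_strict_right_mono)
qed

lemma LR_strict_anti: assumes "mm \<mu> < mm \<nu>" "0 < x" "x < y" shows "LR \<nu> \<mu> y < LR \<nu> \<mu> x"
proof -
  have "LR \<mu> \<nu> x < LR \<mu> \<nu> y" by (rule LR_strict[OF assms])
  moreover have "LR \<nu> \<mu> z = 1 / LR \<mu> \<nu> z" for z
    using LR_inv[of \<mu> \<nu> z] LR_pos[of \<mu> \<nu> z] by (simp add: field_simps)
  ultimately show ?thesis using LR_pos[of \<mu> \<nu>] by (simp add: divide_strict_left_mono frac_less2)
qed

lemma nn_integral_LR: "(\<integral>\<^sup>+x. ennreal (LR \<mu> \<nu> x) \<partial>PP \<mu>) = 1"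
proof -
  have "(\<integral>\<^sup>+x. ennreal (LR \<mu> \<nu> x) \<partial>PP \<mu>) = emeasure (density (PP \<mu>) (\<lambda>x. ennreal (LR \<mu> \<nu> x))) UNIV"
    by (subst emeasure_density) auto
  also have "\<dots> = 1" using prob_space.emeasure_space_1[OF prob_PP, of \<nu>] by (simp add: density_PP)
  finally show ?thesis .
qed

lemma integrable_LR: "integrable (PP \<mu>) (LR \<mu> \<nu>)"
  by (rule integrableI_nonneg) (auto simp: nn_integral_LR intro: less_imp_le[OF LR_pos])

lemma mm_affine: "mm (2 * r - \<mu>) = 2 * mm r - mm \<mu>"
  unfolding mm_def by (simp add: algebra_simps)

lemma LR_sq: "(LR \<mu> r x)\<^sup>2 = exp ((mm r - mm \<mu>)\<^sup>2 / sg\<^sup>2) * LR \<mu> (2 * r - \<mu>) x"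
proof -
  have "(LR \<mu> r x)\<^sup>2 = exp (2 * ((mm r - mm \<mu>) * (2 * ln x - mm \<mu> - mm r) / (2 * sg\<^sup>2)))"
    unfolding LR_formula by (simp add: power2_eq_square exp_add[symmetric])
  also have "\<dots> = exp ((mm r - mm \<mu>)\<^sup>2 / sg\<^sup>2 + (mm (2 * r - \<mu>) - mm \<mu>) * (2 * ln x - mm \<mu> - mm (2 * r - \<mu>)) / (2 * sg\<^sup>2))"
    unfolding mm_affine using sg_pos by (intro arg_cong[where f=exp]) (simp add: field_simps power2_eq_square)
  finally show ?thesis by (simp add: exp_add LR_formula)
qed

lemma integrable_LR_sq: "integrable (PP \<mu>) (\<lambda>x. (LR \<mu> r x)\<^sup>2)"
  unfolding LR_sq by (intro integrable_mult_right integrable_LR)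

end



lemma event_compare:
  fixes P :: "real measure" and \<xi> :: "real \<Rightarrow> real" and A B :: "real set"
  assumes P: "prob_space P" and sP: "sets P = sets borel"
    and pos: "AE x in P. x > 0"
    and \<xi>m[measurable]: "\<xi> \<in> borel_measurable borel" and \<xi>nn: "\<And>x. x > 0 \<Longrightarrow> 0 \<le> \<xi> x"
    and anti: "\<And>x y. 0 < x \<Longrightarrow> x < y \<Longrightarrow> \<xi> y < \<xi> x"
    and \<xi>i: "integrable P \<xi>"
    and A[measurable]: "A \<in> sets borel" and B[measurable]: "B \<in> sets borel"
    and up: "\<And>x y. x \<in> B \<Longrightarrow> 0 < x \<Longrightarrow> x \<le> y \<Longrightarrow> y \<in> B"
    and PAB: "measure P B \<le> measure P A"
  shows "(\<integral>x. \<xi> x * indicator B x \<partial>P) \<le> (\<integral>x. \<xi> x * indicator A x \<partial>P)"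
    and "(\<integral>x. \<xi> x * indicator B x \<partial>P) = (\<integral>x. \<xi> x * indicator A x \<partial>P) \<Longrightarrow>
         (\<forall>y. measure P {y} = 0) \<Longrightarrow> AE x in P. (x \<in> A \<longleftrightarrow> x \<in> B)"
proof -
  interpret prob_space P by (rule P)
  have [measurable_cong, simp]: "sets P = sets borel" by (rule sP)
  have [simp]: "space P = UNIV" using sets_eq_imp_space_eq[OF sP] by simp
  have iA: "integrable P (\<lambda>x. \<xi> x * indicator A x)" by (rule integrable_real_mult_indicator) (auto intro: \<xi>i)
  have iB: "integrable P (\<lambda>x. \<xi> x * indicator B x)" by (rule integrable_real_mult_indicator) (auto intro: \<xi>i)
  let ?C = "{x. 0 < x \<and> x \<notin> B}"
  have "(\<integral>x. \<xi> x * indicator B x \<partial>P) \<le> (\<integral>x. \<xi> x * indicator A x \<partial>P) \<and>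
        ((\<integral>x. \<xi> x * indicator B x \<partial>P) = (\<integral>x. \<xi> x * indicator A x \<partial>P) \<longrightarrow>
         (\<forall>y. measure P {y} = 0) \<longrightarrow> (AE x in P. (x \<in> A \<longleftrightarrow> x \<in> B)))"
  proof (cases "?C = {}")
    case True
    then have "AE x in P. x \<in> B" using pos by (rule_tac eventually_mono) auto
    then have "measure P B = 1" by (simp add: prob_eq_1)
    then have "measure P A = 1" using PAB prob_le_1[of A] by linarith
    then have "AE x in P. x \<in> A" by (simp add: prob_eq_1)
    with \<open>AE x in P. x \<in> B\<close> have ae: "AE x in P. x \<in> A \<and> x \<in> B" by eventually_elim auto
    have "AE x in P. \<xi> x * indicator B x = \<xi> x * indicator A x" using ae by (rule eventually_mono) auto
    then have "(\<integral>x. \<xi> x * indicator B x \<partial>P) = (\<integral>x. \<xi> x * indicator A x \<partial>P)"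
      by (intro integral_cong_AE) auto
    moreover have "AE x in P. (x \<in> A \<longleftrightarrow> x \<in> B)" using ae by (rule eventually_mono) auto
    ultimately show ?thesis by simp
  next
    case False
    define c where "c = Inf (\<xi> ` ?C)"
    have bdd: "bdd_below (\<xi> ` ?C)" using \<xi>nn by (auto simp: bdd_below_def)
    have c_le: "c \<le> \<xi> x" if "x \<in> ?C" for x
      unfolding c_def using that bdd by (intro cInf_lower) auto
    have c_nn: "0 \<le> c" unfolding c_def using False \<xi>nn by (intro cInf_greatest) auto
    have ge_c: "\<xi> x \<le> c" if "x \<in> B" "0 < x" for x
      unfolding c_def
    proof (rule cInf_greatest)
      show "\<xi> ` ?C \<noteq> {}" using False by auto
      fix z assume "z \<in> \<xi> ` ?C"
      then obtain y where y: "y \<in> ?C" "z = \<xi> y" by auto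
      have "y < x" using up[OF that, of y] y(1) by (cases "x \<le> y") auto
      then show "\<xi> x \<le> z" using anti[of y x] y by auto
    qed
    have iIA: "integrable P (indicator A :: real \<Rightarrow> real)" and iIB: "integrable P (indicator B :: real \<Rightarrow> real)"
      by (auto intro!: integrable_real_indicator simp: emeasure_eq_measure)
    have a1: "integrable P (\<lambda>x. c * indicator A x)" "integrable P (\<lambda>x. c * indicator B x)"
      using iIA iIB by auto
    define \<Phi> where "\<Phi> x = (indicator A x - indicator B x) * (\<xi> x - c)" for x
    have \<Phi>nn: "AE x in P. 0 \<le> \<Phi> x" using pos
    proof (rule eventually_mono)
      fix x :: real assume "0 < x"
      then show "0 \<le> \<Phi> x" using c_le[of x] ge_c[of x] unfolding \<Phi>_def
        by (cases "x \<in> A"; cases "x \<in> B") auto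
    qed
    have i\<Phi>: "integrable P \<Phi>"
    proof -
      have "\<Phi> = (\<lambda>x. \<xi> x * indicator A x - \<xi> x * indicator B x - c * indicator A x + c * indicator B x)"
        by (auto simp: \<Phi>_def fun_eq_iff algebra_simps)
      moreover have "integrable P (\<lambda>x. \<xi> x * indicator A x - \<xi> x * indicator B x - c * indicator A x + c * indicator B x)"
      proof -
        have "integrable P (\<lambda>x. \<xi> x * indicator A x - \<xi> x * indicator B x)" using Bochner_Integration.integrable_diff[OF iA iB] by simp
        then have "integrable P (\<lambda>x. \<xi> x * indicator A x - \<xi> x * indicator B x - c * indicator A x)" using Bochner_Integration.integrable_diff[OF _ a1(1)] by simp
        then show ?thesis using Bochner_Integration.integrable_add[OF _ a1(2)] by simp
      qed
      ultimately show ?thesis by simp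
    qed
    have decomp: "(\<integral>x. \<xi> x * indicator A x \<partial>P) - (\<integral>x. \<xi> x * indicator B x \<partial>P)
        = integral\<^sup>L P \<Phi> + c * (measure P A - measure P B)"
    proof -
      have "\<And>x. \<xi> x * indicator A x - \<xi> x * indicator B x = \<Phi> x + c * indicator A x - c * indicator B x"
        unfolding \<Phi>_def by (simp add: algebra_simps)
      then have "(\<integral>x. \<xi> x * indicator A x - \<xi> x * indicator B x \<partial>P) = (\<integral>x. \<Phi> x + c * indicator A x - c * indicator B x \<partial>P)"
        by simp
      also have "\<dots> = integral\<^sup>L P \<Phi> + c * measure P A - c * measure P B"
        using i\<Phi> a1 by (simp add: Bochner_Integration.integral_diff Bochner_Integration.integral_add)
      finally show ?thesis using iA iB by (simp add: Bochner_Integration.integral_diff algebra_simps)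
    qed
    have I\<Phi>: "0 \<le> integral\<^sup>L P \<Phi>" using \<Phi>nn by (rule integral_nonneg_AE)
    have I2: "0 \<le> c * (measure P A - measure P B)" using c_nn PAB by simp
    have le: "(\<integral>x. \<xi> x * indicator B x \<partial>P) \<le> (\<integral>x. \<xi> x * indicator A x \<partial>P)"
      using decomp I\<Phi> I2 by linarith
    moreover
    { assume eq: "(\<integral>x. \<xi> x * indicator B x \<partial>P) = (\<integral>x. \<xi> x * indicator A x \<partial>P)"
        and atom: "\<forall>y. measure P {y} = 0"
      have "integral\<^sup>L P \<Phi> = 0" using decomp I\<Phi> I2 eq by linarith
      then have ae0: "AE x in P. \<Phi> x = 0" using integral_nonneg_eq_0_iff_AE[OF i\<Phi> \<Phi>nn] by simp
      have aenc: "AE x in P. \<not> (0 < x \<and> \<xi> x = c)"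
      proof (cases "\<exists>x0. 0 < x0 \<and> \<xi> x0 = c")
        case True
        then obtain x0 where x0: "0 < x0" "\<xi> x0 = c" by auto
        have "{x0} \<in> null_sets P" using atom by (auto simp: null_sets_def emeasure_eq_measure)
        then have "AE x in P. x \<notin> {x0}" by (rule AE_not_in)
        then show ?thesis
        proof (rule eventually_mono)
          fix x assume "x \<notin> {x0}"
          show "\<not> (0 < x \<and> \<xi> x = c)"
          proof
            assume h: "0 < x \<and> \<xi> x = c"
            have "x \<noteq> x0" using \<open>x \<notin> {x0}\<close> by simp
            then have "x < x0 \<or> x0 < x" by auto
            then show False using anti[of x x0] anti[of x0 x] h x0 by auto
          qed
        qed
      next
        case False then show ?thesis by auto
      qed
      have "AE x in P. (x \<in> A \<longleftrightarrow> x \<in> B)" using ae0 aenc pos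
      proof eventually_elim
        case (elim x)
        then show ?case unfolding \<Phi>_def by (cases "x \<in> A"; cases "x \<in> B") auto
      qed
    }
    ultimately show ?thesis by blast
  qed
  then show "(\<integral>x. \<xi> x * indicator B x \<partial>P) \<le> (\<integral>x. \<xi> x * indicator A x \<partial>P)"
    and "(\<integral>x. \<xi> x * indicator B x \<partial>P) = (\<integral>x. \<xi> x * indicator A x \<partial>P) \<Longrightarrow>
         (\<forall>y. measure P {y} = 0) \<Longrightarrow> AE x in P. (x \<in> A \<longleftrightarrow> x \<in> B)" by blast+
qed




lemma layer_cake:
  fixes f :: "'a \<Rightarrow> real"
  assumes M: "sigma_finite_measure M" and f[measurable]: "f \<in> borel_measurable M"
    and nn: "AE x in M. 0 \<le> f x"
  shows "(\<integral>\<^sup>+x. ennreal (f x) \<partial>M) = (\<integral>\<^sup>+t. indicator {0..} t * emeasure M {x\<in>space M. t < f x} \<partial>lborel)"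
proof -
  interpret P: pair_sigma_finite M lborel
    using M sigma_finite_lborel by (simp add: pair_sigma_finite_def)
  define G :: "'a \<times> real \<Rightarrow> ennreal" where "G p = (if 0 \<le> snd p \<and> snd p < f (fst p) then 1 else 0)" for p
  have Gm: "G \<in> borel_measurable (M \<Otimes>\<^sub>M lborel)" unfolding G_def by measurable
  have "(\<integral>\<^sup>+x. ennreal (f x) \<partial>M) = (\<integral>\<^sup>+x. (\<integral>\<^sup>+t. G (x, t) \<partial>lborel) \<partial>M)"
  proof (rule nn_integral_cong_AE)
    show "AE x in M. ennreal (f x) = (\<integral>\<^sup>+t. G (x, t) \<partial>lborel)" using nn
    proof (rule eventually_mono)
      fix x assume "0 \<le> f x"
      have "(\<integral>\<^sup>+t. G (x, t) \<partial>lborel) = (\<integral>\<^sup>+t. indicator {0..<f x} t \<partial>lborel)"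
        by (intro nn_integral_cong) (auto simp: G_def indicator_def)
      also have "\<dots> = ennreal (f x)" using \<open>0 \<le> f x\<close> by simp
      finally show "ennreal (f x) = (\<integral>\<^sup>+t. G (x, t) \<partial>lborel)" by simp
    qed
  qed
  also have "\<dots> = (\<integral>\<^sup>+t. (\<integral>\<^sup>+x. G (x, t) \<partial>M) \<partial>lborel)"
    using P.Fubini[OF Gm] by simp
  also have "\<dots> = (\<integral>\<^sup>+t. indicator {0..} t * emeasure M {x\<in>space M. t < f x} \<partial>lborel)"
  proof (rule nn_integral_cong)
    fix t :: real
    show "(\<integral>\<^sup>+x. G (x, t) \<partial>M) = indicator {0..} t * emeasure M {x\<in>space M. t < f x}"
    proof (cases "0 \<le> t")
      case True
      have "(\<integral>\<^sup>+x. G (x, t) \<partial>M) = (\<integral>\<^sup>+x. indicator {x\<in>space M. t < f x} x \<partial>M)"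
        by (intro nn_integral_cong) (auto simp: G_def indicator_def True)
      also have "\<dots> = emeasure M {x\<in>space M. t < f x}" by (intro nn_integral_indicator) measurable
      finally show ?thesis using True by simp
    next
      case False
      then show ?thesis by (simp add: G_def)
    qed
  qed
  finally show ?thesis .
qed




locale setting = lognorm +
  fixes r \<mu>1 :: real
  assumes r\<mu>: "r < \<mu>1"
begin

lemma mm_less: "mm r < mm \<mu>1"
  using r\<mu> T by (simp add: mm_def)

lemma lik_measurable[measurable]: "lik (PP \<mu>) N \<in> borel_measurable borel"
proof -
  have "RN_deriv (PP \<mu>) N \<in> borel_measurable (PP \<mu>)" by (rule borel_measurable_RN_deriv)
  then have "RN_deriv (PP \<mu>) N \<in> borel_measurable borel"
    using measurable_cong_sets[OF sets_PP refl] by simp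
  then show ?thesis unfolding lik_def[abs_def] by measurable
qed

lemma L_strict: "strict_mono_on {0<..} (LR r \<mu>1)"
  by (rule strict_mono_onI) (auto intro: LR_strict[OF mm_less])

lemma L_mono: "mono_on {0<..} (LR r \<mu>1)"
  by (rule mono_onI) (metis L_strict le_less strict_mono_onD)

lemma lik_AE_nu: "AE x in PP \<nu>. lik (PP r) (PP \<mu>1) x = LR r \<mu>1 x"
  by (rule AE_PP_transfer[OF lik_AE])

lemma part1: "least_favorable FFSD (PP r) (PP ` {\<mu>1..}) (PP \<mu>1)"
  unfolding least_favorable_def
proof (intro conjI ballI)
  show "PP \<mu>1 \<in> PP ` {\<mu>1..}" by auto
  fix P assume "P \<in> PP ` {\<mu>1..}"
  then obtain \<mu> where \<mu>: "\<mu> \<ge> \<mu>1" "P = PP \<mu>" by auto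
  let ?l = "lik (PP r) (PP \<mu>1)" and ?L = "LR r \<mu>1"
  have d1: "distr (PP \<mu>1) borel ?l = distr (PP \<mu>1) borel ?L"
    by (intro distr_cong_AE lik_AE_nu) auto
  have d2: "distr (PP \<mu>) borel ?l = distr (PP \<mu>) borel ?L"
    by (intro distr_cong_AE lik_AE_nu) auto
  show "pref FFSD (distr (PP \<mu>1) borel ?l) (distr P borel ?l)"
    unfolding pref_def d1 d2 \<mu>(2)
  proof (intro ballI impI)
    fix f :: "real \<Rightarrow> real" assume "f \<in> FFSD"
    then have fm: "mono f" by (simp add: FFSD_def)
    then have [measurable]: "f \<in> borel_measurable borel" by (rule borel_measurable_mono)
    assume i1: "integrable (distr (PP \<mu>1) borel ?L) f" and i2: "integrable (distr (PP \<mu>) borel ?L) f"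
    have j1: "integrable (PP \<mu>1) (\<lambda>x. f (?L x))" using i1 by (subst (asm) integrable_distr_eq) auto
    have j2: "integrable (PP \<mu>) (\<lambda>x. f (?L x))" using i2 by (subst (asm) integrable_distr_eq) auto
    have G: "mono_on {0<..} (\<lambda>x. f (?L x))"
      by (rule mono_onI) (auto intro!: monoD[OF fm] mono_onD[OF L_mono])
    have "(\<integral>x. f (?L x) \<partial>PP \<mu>1) \<le> (\<integral>x. f (?L x) \<partial>PP \<mu>)"
      by (rule translation_ineq[OF \<mu>(1) G _ j1 j2]) measurable
    then show "integral\<^sup>L (distr (PP \<mu>1) borel ?L) f \<le> integral\<^sup>L (distr (PP \<mu>) borel ?L) f"
      by (simp add: integral_distr)
  qed
qed

lemma part2: "\<exists>h. strict_mono_on {0<..} h \<and> (AE x in PP r. lik (PP r) (PP \<mu>1) x = h x)"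
  using L_strict lik_AE by blast

lemma part3: "measure (PP \<mu>1) {x. lik (PP r) (PP \<mu>1) x = y} = 0"
proof -
  have "measure (PP \<mu>1) {x. lik (PP r) (PP \<mu>1) x = y} = measure (PP \<mu>1) {x. 0 < x \<and> LR r \<mu>1 x = y}"
    using lik_AE_nu[of \<mu>1] AE_PP_pos[of \<mu>1]
    by (intro measure_eq_AE) (auto elim: eventually_elim2)
  also have "\<dots> = 0"
  proof (cases "\<exists>x0. 0 < x0 \<and> LR r \<mu>1 x0 = y")
    case True
    then obtain x0 where x0: "0 < x0" "LR r \<mu>1 x0 = y" by auto
    have "{x. 0 < x \<and> LR r \<mu>1 x = y} = {x0}"
      using x0 strict_mono_onD[OF L_strict] by (auto, metis greaterThan_iff linorder_neqE_linordered_idom order_less_irrefl)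
    then show ?thesis by (simp add: measure_PP_singleton)
  next
    case False
    then have "{x. 0 < x \<and> LR r \<mu>1 x = y} = {}" by auto
    then show ?thesis by (metis measure_empty)
  qed
  finally show ?thesis .
qed

lemma part4: "integrable (PP \<mu>1) (\<lambda>x. (1 / lik (PP r) (PP \<mu>1) x)\<^sup>2)"
proof -
  have "AE x in PP \<mu>1. (1 / lik (PP r) (PP \<mu>1) x)\<^sup>2 = (LR \<mu>1 r x)\<^sup>2"
    using lik_AE_nu[of \<mu>1]
  proof (rule eventually_mono)
    fix x assume "lik (PP r) (PP \<mu>1) x = LR r \<mu>1 x"
    moreover have "1 / LR r \<mu>1 x = LR \<mu>1 r x"
      using LR_inv[of r \<mu>1 x] LR_pos[of r \<mu>1 x] by (simp add: field_simps)
    ultimately show "(1 / lik (PP r) (PP \<mu>1) x)\<^sup>2 = (LR \<mu>1 r x)\<^sup>2" by simp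
  qed
  then show ?thesis using integrable_LR_sq[of \<mu>1 r]
    by (subst integrable_cong_AE) auto
qed

end



context setting begin

lemma UU_eq: "UU = density lborel (\<lambda>x. ennreal (indicator {0<..<1::real} x))"
  by (simp add: UU_def ennreal_indicator)

lemma Q_eq: "PP r = density (PP \<mu>1) (\<lambda>x. ennreal (LR \<mu>1 r x))"
  by (simp add: density_PP)

lemma measure_Q: "S \<in> sets borel \<Longrightarrow> measure (PP r) S = (\<integral>x. LR \<mu>1 r x * indicator S x \<partial>PP \<mu>1)"
proof -
  assume S: "S \<in> sets borel"
  have "measure (PP r) S = integral\<^sup>L (PP r) (indicator S)" by simp
  also have "\<dots> = (\<integral>x. LR \<mu>1 r x *\<^sub>R indicator S x \<partial>PP \<mu>1)"
    unfolding Q_eq using S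
    by (intro integral_density) (auto intro: less_imp_le[OF LR_pos])
  finally show ?thesis by simp
qed

lemma Q_pos: "AE x in PP r. x > 0" by (rule AE_PP_pos)

context
  fixes M0 assumes M0: "real_distribution M0" and neg: "\<forall>x<0. cdf M0 x = 0"
    and sq: "set_integrable lborel {0<..<1} (\<lambda>u. (quantile (cdf M0) u)\<^sup>2)"
begin

abbreviation "X \<equiv> Xs M0 \<mu>1"

lemma X_m[measurable]: "X \<in> borel_measurable borel" using Xs_measurable[OF M0] .

lemma X_sq: "integrable (PP \<mu>1) (\<lambda>x. (X x)\<^sup>2)"
proof -
  note qm[measurable] = quantile_measurable[OF M0]
  have "integrable UU (\<lambda>u. (quantile (cdf M0) u)\<^sup>2)"
    unfolding UU_eq using sq unfolding set_integrable_def
    by (subst integrable_density) auto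
  then have "integrable (distr UU borel (quantile (cdf M0))) (\<lambda>y. y\<^sup>2)"
    by (subst integrable_distr_eq) (auto simp: UU_def)
  then have "integrable (distr (PP \<mu>1) borel X) (\<lambda>y. y\<^sup>2)"
    by (simp add: distr_UU_quantile[OF M0] distr_Xs[OF M0])
  then show ?thesis by (subst (asm) integrable_distr_eq) auto
qed

lemma X_nonneg: "x > 0 \<Longrightarrow> 0 \<le> X x" using Xs_nonneg[OF M0 neg] .

lemma X_int_Q: "integrable (PP r) X"
proof -
  have "integrable (PP \<mu>1) (\<lambda>x. (LR \<mu>1 r x)\<^sup>2 + (X x)\<^sup>2)"
    using integrable_LR_sq[of \<mu>1 r] X_sq by (rule Bochner_Integration.integrable_add)
  then have "integrable (PP \<mu>1) (\<lambda>x. LR \<mu>1 r x *\<^sub>R X x)"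
  proof (rule Bochner_Integration.integrable_bound)
    show "(\<lambda>x. LR \<mu>1 r x *\<^sub>R X x) \<in> borel_measurable (PP \<mu>1)" by measurable
    show "AE x in PP \<mu>1. norm (LR \<mu>1 r x *\<^sub>R X x) \<le> norm ((LR \<mu>1 r x)\<^sup>2 + (X x)\<^sup>2)"
    proof (rule AE_I2)
      fix x
      define a where "a = \<bar>LR \<mu>1 r x\<bar>"
      define b where "b = \<bar>X x\<bar>"
      have ab: "0 \<le> a" "0 \<le> b" by (auto simp: a_def b_def)
      have "0 \<le> (a - b)\<^sup>2" by simp
      then have "2 * (a * b) \<le> a\<^sup>2 + b\<^sup>2" by (simp add: power2_diff)
      moreover have "0 \<le> a * b" using ab by simp
      ultimately have "a * b \<le> a\<^sup>2 + b\<^sup>2" by linarith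
      then have "\<bar>LR \<mu>1 r x * X x\<bar> \<le> (LR \<mu>1 r x)\<^sup>2 + (X x)\<^sup>2"
        by (simp add: a_def b_def abs_mult)
      then show "norm (LR \<mu>1 r x *\<^sub>R X x) \<le> norm ((LR \<mu>1 r x)\<^sup>2 + (X x)\<^sup>2)" by simp
    qed
  qed
  then show ?thesis unfolding Q_eq
    by (subst integrable_density) (auto intro: less_imp_le[OF LR_pos])
qed

lemma X_payoff: "payoff (PP r) X"
  unfolding payoff_def using X_int_Q X_nonneg X_m by blast

lemma X_feasible: "robust_feasible FFSD (PP r) (PP ` {\<mu>1..}) M0 X"
  unfolding robust_feasible_def
proof (intro conjI X_payoff ballI)
  fix P assume "P \<in> PP ` {\<mu>1..}"
  then obtain \<mu> where \<mu>: "\<mu> \<ge> \<mu>1" "P = PP \<mu>" by auto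
  show "pref FFSD M0 (distr P borel X)"
    unfolding pref_def \<mu>(2)
  proof (intro ballI impI)
    fix f :: "real \<Rightarrow> real" assume "f \<in> FFSD"
    then have fm: "mono f" by (simp add: FFSD_def)
    then have [measurable]: "f \<in> borel_measurable borel" by (rule borel_measurable_mono)
    assume i1: "integrable M0 f" and i2: "integrable (distr (PP \<mu>) borel X) f"
    have "integrable (distr (PP \<mu>1) borel X) f" using i1 by (simp only: distr_Xs[OF M0])
    then have j1: "integrable (PP \<mu>1) (\<lambda>x. f (X x))" by (subst (asm) integrable_distr_eq) auto
    have j2: "integrable (PP \<mu>) (\<lambda>x. f (X x))" using i2 by (subst (asm) integrable_distr_eq) auto
    have G: "mono_on {0<..} (\<lambda>x. f (X x))"
    proof (rule mono_onI)
      fix a b :: real assume "a \<in> {0<..}" "b \<in> {0<..}" "a \<le> b"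
      then have "X a \<le> X b" by (rule mono_onD[OF Xs_mono[OF M0]])
      then show "f (X a) \<le> f (X b)" by (rule monoD[OF fm])
    qed
    have "(\<integral>x. f (X x) \<partial>PP \<mu>1) \<le> (\<integral>x. f (X x) \<partial>PP \<mu>)"
      by (rule translation_ineq[OF \<mu>(1) G _ j1 j2]) measurable
    moreover have "integral\<^sup>L (distr (PP \<mu>1) borel X) f = (\<integral>x. f (X x) \<partial>PP \<mu>1)"
      by (simp add: integral_distr)
    then have "integral\<^sup>L M0 f = (\<integral>x. f (X x) \<partial>PP \<mu>1)" by (simp only: distr_Xs[OF M0])
    ultimately show "integral\<^sup>L M0 f \<le> integral\<^sup>L (distr (PP \<mu>) borel X) f"
      by (simp add: integral_distr)
  qed
qed

lemma tail_P1:
  assumes h: "robust_feasible FFSD (PP r) (PP ` {\<mu>1..}) M0 h"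
  shows "measure (PP \<mu>1) {x. t < X x} \<le> measure (PP \<mu>1) {x. t < h x}"
proof -
  have hm[measurable]: "h \<in> borel_measurable borel" using h by (simp add: robust_feasible_def payoff_def)
  have "pref FFSD M0 (distr (PP \<mu>1) borel h)" using h by (auto simp: robust_feasible_def)
  moreover have "indicator {t<..} \<in> FFSD" by (auto simp: FFSD_def mono_def indicator_def)
  moreover have "integrable M0 (indicator {t<..} :: real \<Rightarrow> real)"
  proof -
    interpret M0: real_distribution M0 by (rule M0)
    show ?thesis by (intro integrable_real_indicator) (auto simp: M0.emeasure_eq_measure)
  qed
  moreover have "integrable (distr (PP \<mu>1) borel h) (indicator {t<..} :: real \<Rightarrow> real)"
  proof -
    interpret D: prob_space "distr (PP \<mu>1) borel h" by (intro prob_space.prob_space_distr[OF prob_PP]) simp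
    show ?thesis by (intro integrable_real_indicator) (auto simp: D.emeasure_eq_measure)
  qed
  ultimately have "integral\<^sup>L M0 (indicator {t<..} :: real \<Rightarrow> real) \<le> integral\<^sup>L (distr (PP \<mu>1) borel h) (indicator {t<..})"
    unfolding pref_def by blast
  moreover have "integral\<^sup>L (distr (PP \<mu>1) borel X) (indicator {t<..} :: real \<Rightarrow> real) = measure (PP \<mu>1) {x. t < X x}"
    by (simp add: measure_distr vimage_def)
  then have "integral\<^sup>L M0 (indicator {t<..} :: real \<Rightarrow> real) = measure (PP \<mu>1) {x. t < X x}"
    by (simp only: distr_Xs[OF M0])
  moreover have "integral\<^sup>L (distr (PP \<mu>1) borel h) (indicator {t<..} :: real \<Rightarrow> real) = measure (PP \<mu>1) {x. t < h x}"
    by (simp add: measure_distr vimage_def)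
  ultimately show ?thesis by simp
qed

lemma X_upper: "x \<in> {x. t < X x} \<Longrightarrow> 0 < x \<Longrightarrow> x \<le> y \<Longrightarrow> y \<in> {x. t < X x}"
  using mono_onD[OF Xs_mono[OF M0, of \<mu>1], of x y] by auto

lemma tail_Q:
  assumes h: "robust_feasible FFSD (PP r) (PP ` {\<mu>1..}) M0 h"
  shows "measure (PP r) {x. t < X x} \<le> measure (PP r) {x. t < h x}"
proof -
  have hm[measurable]: "h \<in> borel_measurable borel" using h by (simp add: robust_feasible_def payoff_def)
  have "(\<integral>x. LR \<mu>1 r x * indicator {x. t < X x} x \<partial>PP \<mu>1) \<le> (\<integral>x. LR \<mu>1 r x * indicator {x. t < h x} x \<partial>PP \<mu>1)"
    by (rule event_compare(1)[OF prob_PP sets_PP AE_PP_pos LR_measurable _ LR_strict_anti[OF mm_less]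
          integrable_LR _ _ X_upper tail_P1[OF h]]) (auto intro: less_imp_le[OF LR_pos])
  then show ?thesis by (simp add: measure_Q)
qed

end
end



context setting begin

context
  fixes M0 assumes M0: "real_distribution M0" and neg: "\<forall>x<0. cdf M0 x = 0"
    and sq: "set_integrable lborel {0<..<1} (\<lambda>u. (quantile (cdf M0) u)\<^sup>2)"
begin

abbreviation "XX \<equiv> Xs M0 \<mu>1"
abbreviation "\<phi> h t \<equiv> indicator {0..} t * emeasure (PP r) {x. t < h x}"

lemma payoff_nn: "payoff (PP r) h \<Longrightarrow> AE x in PP r. 0 \<le> h x"
  using Q_pos unfolding payoff_def by (auto elim: eventually_mono)

lemma nn_int_payoff:
  assumes h: "payoff (PP r) h"
  shows "(\<integral>\<^sup>+x. ennreal (h x) \<partial>PP r) = (\<integral>\<^sup>+t. \<phi> h t \<partial>lborel)"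
    and "(\<integral>\<^sup>+x. ennreal (h x) \<partial>PP r) = ennreal (integral\<^sup>L (PP r) h)"
proof -
  have hm[measurable]: "h \<in> borel_measurable borel" using h by (simp add: payoff_def)
  show "(\<integral>\<^sup>+x. ennreal (h x) \<partial>PP r) = (\<integral>\<^sup>+t. \<phi> h t \<partial>lborel)"
    using layer_cake[OF sigma_finite_PP, of h r] payoff_nn[OF h] by simp
  show "(\<integral>\<^sup>+x. ennreal (h x) \<partial>PP r) = ennreal (integral\<^sup>L (PP r) h)"
    using h payoff_nn[OF h] by (intro nn_integral_eq_integral) (auto simp: payoff_def)
qed

lemma X_payoff': "payoff (PP r) XX" by (rule X_payoff[OF M0 neg sq])

lemma emeasure_PP: "emeasure (PP \<mu>) A = ennreal (measure (PP \<mu>) A)"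
proof -
  interpret prob_space "PP \<mu>" by (rule prob_PP)
  show ?thesis by (rule emeasure_eq_measure)
qed

lemma phi_le: "robust_feasible FFSD (PP r) (PP ` {\<mu>1..}) M0 h \<Longrightarrow> \<phi> XX t \<le> \<phi> h t"
  using tail_Q[OF M0 neg sq, of h t]
  by (auto intro!: mult_left_mono simp: emeasure_PP indicator_def)

lemma price_le:
  assumes h: "robust_feasible FFSD (PP r) (PP ` {\<mu>1..}) M0 h"
  shows "integral\<^sup>L (PP r) XX \<le> integral\<^sup>L (PP r) h"
proof -
  have hp: "payoff (PP r) h" using h by (simp add: robust_feasible_def)
  have "ennreal (integral\<^sup>L (PP r) XX) \<le> ennreal (integral\<^sup>L (PP r) h)"
    unfolding nn_int_payoff(2)[OF hp, symmetric] nn_int_payoff(2)[OF X_payoff', symmetric]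
    unfolding nn_int_payoff(1)[OF hp] nn_int_payoff(1)[OF X_payoff']
    by (intro nn_integral_mono phi_le[OF h])
  moreover have "0 \<le> integral\<^sup>L (PP r) h" using payoff_nn[OF hp] by (rule integral_nonneg_AE)
  ultimately show ?thesis by simp
qed

lemma X_solution: "robust_solution FFSD r T (PP r) (PP ` {\<mu>1..}) M0 XX"
  unfolding robust_solution_def price_def
  using X_feasible[OF M0 neg sq] price_le by (auto intro: mult_left_mono)

end
end



context setting begin

context
  fixes M0 assumes M0: "real_distribution M0" and neg: "\<forall>x<0. cdf M0 x = 0"
    and sq: "set_integrable lborel {0<..<1} (\<lambda>u. (quantile (cdf M0) u)\<^sup>2)"
begin

lemma tail_measurable:
  fixes h :: "real \<Rightarrow> real"
  assumes [measurable]: "h \<in> borel_measurable borel"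
  shows "(\<lambda>t. indicator {0..} t * emeasure (PP r) {x. t < h x}) \<in> borel_measurable borel"
proof -
  interpret prob_space "PP r" by (rule prob_PP)
  have "mono (\<lambda>t. - measure (PP r) {x. t < h x})"
    by (rule monoI) (auto intro!: finite_measure_mono)
  then have "(\<lambda>t. - measure (PP r) {x. t < h x}) \<in> borel_measurable borel" by (rule borel_measurable_mono)
  then have "(\<lambda>t. - (- measure (PP r) {x. t < h x})) \<in> borel_measurable borel" by measurable
  then have [measurable]: "(\<lambda>t. measure (PP r) {x. t < h x}) \<in> borel_measurable borel" by simp
  show ?thesis by (simp add: emeasure_eq_measure)
qed

lemma uniqueness:
  assumes g: "robust_solution FFSD r T (PP r) (PP ` {\<mu>1..}) M0 g"
  shows "AE x in PP \<mu>1. g x = Xs M0 \<mu>1 x"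
proof -
  let ?X = "Xs M0 \<mu>1"
  note Xsol = X_solution[OF M0 neg sq]
  have gf: "robust_feasible FFSD (PP r) (PP ` {\<mu>1..}) M0 g" using g by (simp add: robust_solution_def)
  have Xf: "robust_feasible FFSD (PP r) (PP ` {\<mu>1..}) M0 ?X" using Xsol by (simp add: robust_solution_def)
  have gp: "payoff (PP r) g" using gf by (simp add: robust_feasible_def)
  have gm[measurable]: "g \<in> borel_measurable borel" using gp by (simp add: payoff_def)
  have Xp: "payoff (PP r) ?X" by (rule X_payoff'[OF M0 neg sq])
  have Xm[measurable]: "?X \<in> borel_measurable borel" using Xp by (simp add: payoff_def)
  have "price r T (PP r) g \<le> price r T (PP r) ?X" using g Xf by (simp add: robust_solution_def)
  moreover have "price r T (PP r) ?X \<le> price r T (PP r) g" using Xsol gf by (simp add: robust_solution_def)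
  ultimately have eqI: "integral\<^sup>L (PP r) g = integral\<^sup>L (PP r) ?X" by (simp add: price_def)
  let ?pg = "\<lambda>t. indicator {0..} t * emeasure (PP r) {x. t < g x}"
  let ?pX = "\<lambda>t. indicator {0..} t * emeasure (PP r) {x. t < ?X x}"
  have Ig: "(\<integral>\<^sup>+t. ?pg t \<partial>lborel) = ennreal (integral\<^sup>L (PP r) g)"
    using nn_int_payoff[OF M0 neg sq gp] by simp
  have IX: "(\<integral>\<^sup>+t. ?pX t \<partial>lborel) = ennreal (integral\<^sup>L (PP r) ?X)"
    using nn_int_payoff[OF M0 neg sq Xp] by simp
  have le: "\<And>t. ?pX t \<le> ?pg t" by (rule phi_le[OF M0 neg sq gf])
  have pgm[measurable]: "?pg \<in> borel_measurable borel" by (rule tail_measurable) simp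
  have pXm[measurable]: "?pX \<in> borel_measurable borel" by (rule tail_measurable) simp
  have pdm: "(\<lambda>t. ?pg t - ?pX t) \<in> borel_measurable borel" by measurable
  have "(\<integral>\<^sup>+t. ?pg t - ?pX t \<partial>lborel) = (\<integral>\<^sup>+t. ?pg t \<partial>lborel) - (\<integral>\<^sup>+t. ?pX t \<partial>lborel)"
    by (rule nn_integral_diff) (auto simp: IX le)
  also have "\<dots> = 0" using Ig IX eqI by simp
  finally have "AE t in lborel. ?pg t - ?pX t = 0"
    by (subst (asm) nn_integral_0_iff_AE) (auto intro: pdm)
  then have ae_t: "AE t in lborel. 0 \<le> t \<longrightarrow> (AE x in PP \<mu>1. (t < g x \<longleftrightarrow> t < ?X x))"
  proof (rule eventually_mono)
    fix t :: real assume h0: "?pg t - ?pX t = 0"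
    show "0 \<le> t \<longrightarrow> (AE x in PP \<mu>1. (t < g x \<longleftrightarrow> t < ?X x))"
    proof
      assume t: "0 \<le> t"
      have "?pg t \<le> ?pX t" using ennreal_minus_eq_0[OF h0] .
      then have "measure (PP r) {x. t < g x} \<le> measure (PP r) {x. t < ?X x}"
        using t by (simp add: emeasure_PP[OF M0 neg sq])
      moreover have "measure (PP r) {x. t < ?X x} \<le> measure (PP r) {x. t < g x}"
        by (rule tail_Q[OF M0 neg sq gf])
      ultimately have "measure (PP r) {x. t < ?X x} = measure (PP r) {x. t < g x}" by simp
      then have "(\<integral>x. LR \<mu>1 r x * indicator {x. t < ?X x} x \<partial>PP \<mu>1) = (\<integral>x. LR \<mu>1 r x * indicator {x. t < g x} x \<partial>PP \<mu>1)"
        by (simp add: measure_Q)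
      then have "AE x in PP \<mu>1. (x \<in> {x. t < g x} \<longleftrightarrow> x \<in> {x. t < ?X x})"
      proof -
        assume eq: "?this"
        have nn: "\<And>x. 0 < x \<Longrightarrow> 0 \<le> LR \<mu>1 r x" by (auto intro: less_imp_le[OF LR_pos])
        have s1: "{x. t < g x} \<in> sets borel" by measurable
        have s2: "{x. t < ?X x} \<in> sets borel" by measurable
        show ?thesis
          by (rule event_compare(2)[OF prob_PP sets_PP AE_PP_pos LR_measurable nn LR_strict_anti[OF mm_less]
            integrable_LR s1 s2 X_upper[OF M0 neg sq] tail_P1[OF M0 neg sq gf] eq])
             (auto intro: measure_PP_singleton)
      qed
      then show "AE x in PP \<mu>1. (t < g x \<longleftrightarrow> t < ?X x)" by simp
    qed
  qed
  have AEtx: "AE t in lborel. AE x in PP \<mu>1. (0 \<le> t \<longrightarrow> (t < g x \<longleftrightarrow> t < ?X x))"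
    using ae_t by (rule eventually_mono) (auto intro: AE_I2)
  interpret PS: pair_sigma_finite lborel "PP \<mu>1"
    using sigma_finite_PP sigma_finite_lborel by (simp add: pair_sigma_finite_def)
  have "Measurable.pred (lborel \<Otimes>\<^sub>M PP \<mu>1) (\<lambda>p. 0 \<le> fst p \<longrightarrow> (fst p < g (snd p) \<longleftrightarrow> fst p < ?X (snd p)))"
    by measurable
  then have sset: "{p\<in>space (lborel \<Otimes>\<^sub>M PP \<mu>1). 0 \<le> fst p \<longrightarrow> (fst p < g (snd p) \<longleftrightarrow> fst p < ?X (snd p))} \<in> sets (lborel \<Otimes>\<^sub>M PP \<mu>1)"
    by (simp add: pred_def)
  have "AE x in PP \<mu>1. AE t in lborel. (0 \<le> t \<longrightarrow> (t < g x \<longleftrightarrow> t < ?X x))"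
    using PS.AE_commute[of "\<lambda>t x. 0 \<le> t \<longrightarrow> (t < g x \<longleftrightarrow> t < ?X x)"] sset AEtx by simp
  then show ?thesis using AE_PP_pos[of \<mu>1]
  proof eventually_elim
    case (elim x)
    note aet = elim(1) and xpos = elim(2)
    have g0: "0 \<le> g x" using gp xpos by (simp add: payoff_def)
    have X0: "0 \<le> ?X x" using X_nonneg[OF M0 neg sq xpos] .
    show "g x = ?X x"
    proof (rule ccontr)
      assume ne: "g x \<noteq> ?X x"
      define a where "a = min (g x) (?X x)"
      define b where "b = max (g x) (?X x)"
      have ab: "a < b" "0 \<le> a" using ne g0 X0 by (auto simp: a_def b_def)
      have "AE t in lborel. t \<notin> {a<..<b}" using aet
      proof (rule eventually_mono)
        fix t assume "0 \<le> t \<longrightarrow> (t < g x \<longleftrightarrow> t < ?X x)"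
        then show "t \<notin> {a<..<b}" using ab by (auto simp: a_def b_def)
      qed
      then have "emeasure lborel {a<..<b} = 0"
        by (subst (asm) AE_iff_measurable[of "{a<..<b}"]) auto
      then show False using ab by simp
    qed
  qed
qed

end
end

theorem mainTheorem5:
  fixes T r S0 s \<mu>1 :: real
  assumes "T > 0" and "S0 > 0" and "s > 0" and "\<mu>1 > r"
  defines "Q \<equiv> ST_law S0 s T r"
    and "\<P> \<equiv> ST_law S0 s T ` {\<mu>1..}"
    and "P1 \<equiv> ST_law S0 s T \<mu>1"
  shows "least_favorable FFSD Q \<P> P1
    \<and> (\<exists>h. strict_mono_on {0<..} h \<and> (AE x in Q. lik Q P1 x = h x))
    \<and> (\<forall>y. measure P1 {x. lik Q P1 x = y} = 0)
    \<and> integrable P1 (\<lambda>x. (1 / lik Q P1 x)\<^sup>2)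
    \<and> (\<forall>M0. real_distribution M0 \<longrightarrow> (\<forall>x<0. cdf M0 x = 0)
          \<longrightarrow> set_integrable lborel {0<..<1} (\<lambda>u. (quantile (cdf M0) u)\<^sup>2)
          \<longrightarrow> robust_solution FFSD r T Q \<P> M0 (\<lambda>x. quantile (cdf M0) (cdf P1 x))
            \<and> (\<forall>g. robust_solution FFSD r T Q \<P> M0 g
                   \<longrightarrow> (AE x in P1. g x = quantile (cdf M0) (cdf P1 x))))"
proof -
  interpret setting S0 s T r \<mu>1
    by unfold_locales (use assms in auto)
  have eQ: "Q = PP r" and eP: "\<P> = PP ` {\<mu>1..}" and eP1: "P1 = PP \<mu>1"
    by (simp_all add: Q_def \<P>_def P1_def PP_def[abs_def])
  have eX: "\<And>M0. (\<lambda>x. quantile (cdf M0) (cdf (PP \<mu>1) x)) = Xs M0 \<mu>1"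
    by (simp add: Xs_def[abs_def])
  have p5: "\<forall>M0. real_distribution M0 \<longrightarrow> (\<forall>x<0. cdf M0 x = 0)
          \<longrightarrow> set_integrable lborel {0<..<1} (\<lambda>u. (quantile (cdf M0) u)\<^sup>2)
          \<longrightarrow> robust_solution FFSD r T (PP r) (PP ` {\<mu>1..}) M0 (Xs M0 \<mu>1)
            \<and> (\<forall>g. robust_solution FFSD r T (PP r) (PP ` {\<mu>1..}) M0 g
                   \<longrightarrow> (AE x in PP \<mu>1. g x = quantile (cdf M0) (cdf (PP \<mu>1) x)))"
  proof (intro allI impI conjI)
    fix M0 g assume a: "real_distribution M0" "\<forall>x<0. cdf M0 x = 0"
      "set_integrable lborel {0<..<1} (\<lambda>u. (quantile (cdf M0) u)\<^sup>2)"
    show "robust_solution FFSD r T (PP r) (PP ` {\<mu>1..}) M0 (Xs M0 \<mu>1)" by (rule X_solution[OF a])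
    assume "robust_solution FFSD r T (PP r) (PP ` {\<mu>1..}) M0 g"
    then have "AE x in PP \<mu>1. g x = Xs M0 \<mu>1 x" by (rule uniqueness[OF a])
    then show "AE x in PP \<mu>1. g x = quantile (cdf M0) (cdf (PP \<mu>1) x)" by (simp add: Xs_def)
  qed
  have p3: "\<forall>y. measure (PP \<mu>1) {x. lik (PP r) (PP \<mu>1) x = y} = 0" using part3 by blast
  show ?thesis
    unfolding eQ eP eP1 eX
    using part1 part2 p3 part4 p5 by (intro conjI)
qed

end
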